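(* Let $\lambda$ be a positive, increasing, smooth function on $[0,\infty)$ such that $\liminf_{x\to\infty}S(x,\lambda)>0$. Let $g$ be a positive differentiable function on $(0,\infty)$ such that $X\mapsto\log g(e^X)$ is convex and \[ \int_0^\infty g(x)\,\lambda(x)^{-1}\,dx<\infty . \] Then $\lim_{x\to\infty}g(x)\lambda(x)^{-1}=0$.
   Context: For a positive increasing smooth function $\lambda$ and $x_0>0$ in its domain, \[ S(x_0,\lambda)=\int_{x_0}^\infty\frac{\lambda(x_0)}{\lambda(x)}\left(\frac{x}{x_0}\right)^{x_0\lambda'(x_0)/\lambda(x_0)}dx . \] *)

theory Defs
  imports "HOL-Analysis.Analysis"
begin

definition smooth_on_nonneg :: "(real \<Rightarrow> real) \<Rightarrow> bool" where
  "smooth_on_nonneg f \<longleftrightarrow>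
     (\<exists>D :: nat \<Rightarrow> real \<Rightarrow> real. D 0 = f \<and>
        (\<forall>n. \<forall>x\<ge>0. (D n has_real_derivative D (Suc n) x) (at x within {0..})))"

definition S_int :: "real \<Rightarrow> (real \<Rightarrow> real) \<Rightarrow> ennreal" where
  "S_int x0 lam =
     (\<integral>\<^sup>+ x \<in> {x0..}. ennreal ((lam x0 / lam x) *
         (x / x0) powr (x0 * deriv lam x0 / lam x0)) \<partial>lborel)"

end

theory Submission
  imports Defs
begin

lemma meas_ind:
  fixes f :: "real \<Rightarrow> real"
  assumes "continuous_on {a..} f"
  shows "(\<lambda>x. ennreal (f x) * indicator {a..} x) \<in> borel_measurable lborel"
proof -
  have m: "(\<lambda>x. indicator {a..} x *\<^sub>R f x) \<in> borel_measurable borel"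
    by (rule borel_measurable_continuous_on_indicator) (auto simp: assms)
  have "(\<lambda>x. ennreal (indicator {a..} x *\<^sub>R f x)) \<in> borel_measurable borel"
    using measurable_compose[OF m measurable_ennreal] by (simp add: o_def)
  moreover have "(\<lambda>x. ennreal (f x) * indicator {a..} x) = (\<lambda>x. ennreal (indicator {a..} x *\<^sub>R f x))"
    by (auto simp: indicator_def fun_eq_iff)
  ultimately show ?thesis by simp
qed

lemma tail_small:
  fixes F :: "real \<Rightarrow> real"
  assumes cont: "continuous_on {0<..} F"
    and fin: "(\<integral>\<^sup>+ x \<in> {0<..}. ennreal (F x) \<partial>lborel) < \<infinity>"
    and eta: "\<eta> > 0"
  shows "\<exists>M. \<forall>z\<ge>M. (\<integral>\<^sup>+ x \<in> {z..}. ennreal (F x) \<partial>lborel) < \<eta>"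
proof -
  define f where "f i x = ennreal (F x) * indicator {real i + 1..} x" for i :: nat and x
  have meas: "f i \<in> borel_measurable lborel" for i
    unfolding f_def by (rule meas_ind) (rule continuous_on_subset[OF cont], auto)
  have le0: "(\<integral>\<^sup>+ x. f i x \<partial>lborel) \<le> (\<integral>\<^sup>+ x \<in> {0<..}. ennreal (F x) \<partial>lborel)" for i
    unfolding f_def by (rule nn_integral_mono) (auto simp: indicator_def)
  have fle: "f j x \<le> f i x" if "i \<le> j" for i j x
    unfolding f_def indicator_def using that by auto
  have dec: "decseq f"
    using fle by (auto simp: decseq_def monotone_def monotone_on_def le_fun_def)
  have inf0: "(INF i. f i x) = 0" for x
  proof -
    have "(INF i. f i x) \<le> f (nat \<lceil>x\<rceil>) x" by (rule INF_lower) auto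
    also have "f (nat \<lceil>x\<rceil>) x = 0"
      unfolding f_def indicator_def by auto (linarith)
    finally show ?thesis by simp
  qed
  have "(\<integral>\<^sup>+ x. (INF i. f i x) \<partial>lborel) = (INF i. integral\<^sup>N lborel (f i))"
    by (rule nn_integral_monotone_convergence_INF_decseq[OF dec meas])
       (use le0 fin in \<open>auto intro: le_less_trans\<close>)
  hence "(INF i. integral\<^sup>N lborel (f i)) < \<eta>" using inf0 eta by simp
  then obtain i where i: "integral\<^sup>N lborel (f i) < \<eta>" by (auto simp: INF_less_iff)
  show ?thesis
  proof (intro exI allI impI)
    fix z assume z: "z \<ge> real i + 1"
    have "(\<integral>\<^sup>+ x \<in> {z..}. ennreal (F x) \<partial>lborel) \<le> integral\<^sup>N lborel (f i)"
      unfolding f_def using z by (intro nn_integral_mono) (auto simp: indicator_def)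
    thus "(\<integral>\<^sup>+ x \<in> {z..}. ennreal (F x) \<partial>lborel) < \<eta>" using i by simp
  qed
qed

theorem theorem4p2:
  fixes lam g :: "real \<Rightarrow> real"
  assumes lam_pos: "\<forall>x\<ge>0. lam x > 0"
    and lam_incr: "mono_on {0..} lam"
    and lam_smooth: "smooth_on_nonneg lam"
    and S_liminf: "Liminf at_top (\<lambda>x. S_int x lam) > 0"
    and g_pos: "\<forall>x>0. g x > 0"
    and g_diff: "\<forall>x>0. g differentiable (at x)"
    and g_logconvex: "convex_on UNIV (\<lambda>X. ln (g (exp X)))"
    and int_fin: "(\<integral>\<^sup>+ x \<in> {0<..}. ennreal (g x / lam x) \<partial>lborel) < \<infinity>"
  shows "((\<lambda>x. g x / lam x) \<longlongrightarrow> 0) at_top"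
proof -
  obtain D where D0: "D 0 = lam"
    and Dd: "\<And>n x. x \<ge> 0 \<Longrightarrow> (D n has_real_derivative D (Suc n) x) (at x within {0..})"
    using lam_smooth unfolding smooth_on_nonneg_def by blast
  have lam_derw: "x \<ge> 0 \<Longrightarrow> (lam has_real_derivative D 1 x) (at x within {0..})" for x
    using Dd[of x 0] D0 by simp
  have lam_der: "(lam has_real_derivative D 1 x) (at x)" if "x > 0" for x
  proof -
    have "(lam has_real_derivative D 1 x) (at x within {0<..})"
      by (rule has_field_derivative_subset[OF lam_derw]) (use that in auto)
    thus ?thesis using at_within_open[of x "{0<..}"] that by simp
  qed
  have lam_cont: "continuous_on {0..} lam"
    by (rule DERIV_continuous_on[OF lam_derw]) auto
  have dlam: "deriv lam x = D 1 x" if "x > 0" for x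
    using DERIV_imp_deriv[OF lam_der[OF that]] .
  have g_der: "(g has_real_derivative deriv g x) (at x)" if "x > 0" for x
    using g_diff that DERIV_deriv_iff_real_differentiable by blast
  define F where "F x = g x / lam x" for x
  have F_der: "(F has_real_derivative (deriv g x * lam x - g x * D 1 x) / (lam x * lam x)) (at x)"
    if "x > 0" for x
  proof -
    have "lam x > 0" using lam_pos that by simp
    hence "lam x \<noteq> 0" by simp
    thus ?thesis unfolding F_def using DERIV_divide[OF g_der[OF that] lam_der[OF that]] by simp
  qed
  have F_cont: "continuous_on {0<..} F"
    by (rule DERIV_continuous_on[of _ _ "\<lambda>x. (deriv g x * lam x - g x * D 1 x) / (lam x * lam x)"])
       (use F_der has_field_derivative_at_within in blast)
  have F_pos: "x > 0 \<Longrightarrow> F x > 0" for x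
    unfolding F_def using lam_pos g_pos by simp

  have tangent: "g x \<ge> g z * (x / z) powr (z * deriv g z / g z)" if z: "z > 0" and x: "x > 0" for x z
  proof -
    let ?t = "z * deriv g z / g z"
    have d1: "((\<lambda>X. g (exp X)) has_real_derivative deriv g z * z) (at (ln z))"
      using DERIV_chain2[of g "deriv g z" exp "ln z" "z" UNIV] g_der[OF z] z
        DERIV_exp[of "ln z"] by simp
    have "((\<lambda>X. ln (g (exp X))) has_real_derivative inverse (g z) * (deriv g z * z)) (at (ln z))"
      using DERIV_chain2[OF _ d1, of ln "inverse (g z)"] DERIV_ln[of "g z"] g_pos z by simp
    hence d2: "((\<lambda>X. ln (g (exp X))) has_real_derivative ?t) (at (ln z) within UNIV)"
      by (simp add: field_simps)
    have "ln (g (exp (ln x))) - ln (g (exp (ln z))) \<ge> ?t * (ln x - ln z)"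
      by (rule convex_on_imp_above_tangent[OF g_logconvex _ _ _ d2]) auto
    hence "ln (g x) \<ge> ln (g z) + ?t * ln (x / z)"
      using x z by (simp add: ln_div)
    hence "exp (ln (g x)) \<ge> exp (ln (g z) + ?t * ln (x / z))" by simp
    thus ?thesis using x z g_pos by (simp add: exp_add powr_def mult.commute)
  qed

  have good: "ennreal (F z) * S_int z lam \<le> (\<integral>\<^sup>+ x \<in> {z..}. ennreal (F x) \<partial>lborel)"
    if z: "z > 0" and nn: "deriv g z * lam z - g z * D 1 z \<ge> 0" for z
  proof -
    define s where "s = z * deriv lam z / lam z"
    define t where "t = z * deriv g z / g z"
    define h where "h x = (lam z / lam x) * (x / z) powr s" for x
    have lz: "lam z > 0" using lam_pos z by simp
    have gz: "g z > 0" using g_pos z by simp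
    have st: "s \<le> t"
    proof -
      have "D 1 z / lam z \<le> deriv g z / g z"
        using nn lz gz by (simp add: field_simps)
      thus ?thesis unfolding s_def t_def dlam[OF z] using z
        by (simp add: mult_left_mono divide_inverse mult.assoc)
    qed
    have hcont: "continuous_on {z..} h"
    proof -
      have "continuous_on {z..} lam" by (rule continuous_on_subset[OF lam_cont]) (use z in auto)
      moreover have "\<forall>x\<in>{z..}. lam x \<noteq> 0"
      proof
        fix x assume "x \<in> {z..}"
        hence "x \<ge> 0" using z by simp
        hence "lam x > 0" using lam_pos by blast
        thus "lam x \<noteq> 0" by simp
      qed
      ultimately show ?thesis unfolding h_def using z
        by (intro continuous_intros) auto
    qed
    have pt: "ennreal (F z) * (ennreal (h x) * indicator {z..} x) \<le> ennreal (F x) * indicator {z..} x" for x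
    proof (cases "x \<ge> z")
      case True
      have "x \<ge> 0" using z True by simp
      hence lx: "lam x > 0" using lam_pos by blast
      have "(x / z) powr s \<le> (x / z) powr t" by (rule powr_mono[OF st]) (use True z in auto)
      hence "g z * (x / z) powr s \<le> g z * (x / z) powr t"
        using gz by (intro mult_left_mono) auto
      also have "\<dots> \<le> g x" using tangent[OF z, of x] True z unfolding t_def by simp
      finally have "g z * (x / z) powr s \<le> g x" .
      hence "F z * h x \<le> F x"
        unfolding F_def h_def using lx lz by (simp add: field_simps)
      moreover have "h x \<ge> 0" unfolding h_def using lx lz by simp
      ultimately show ?thesis using True F_pos[OF z]
        by (simp add: ennreal_mult'' [symmetric] ennreal_leI)
    qed simp
    have "ennreal (F z) * S_int z lam = ennreal (F z) * (\<integral>\<^sup>+ x. ennreal (h x) * indicator {z..} x \<partial>lborel)"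
      unfolding S_int_def h_def s_def by simp
    also have "\<dots> = (\<integral>\<^sup>+ x. ennreal (F z) * (ennreal (h x) * indicator {z..} x) \<partial>lborel)"
      by (rule nn_integral_cmult[symmetric]) (rule meas_ind[OF hcont])
    also have "\<dots> \<le> (\<integral>\<^sup>+ x \<in> {z..}. ennreal (F x) \<partial>lborel)"
      by (rule nn_integral_mono) (rule pt)
    finally show ?thesis .
  qed

  have maxarg: "\<exists>z. u < z \<and> z \<le> x0 \<and> F x0 \<le> F z \<and> deriv g z * lam z - g z * D 1 z \<ge> 0"
    if u: "u > 0" "u < x0" "F u < F x0" for u x0
  proof -
    have "continuous_on {u..x0} F" by (rule continuous_on_subset[OF F_cont]) (use u in auto)
    then obtain z where z: "z \<in> {u..x0}" and zmax: "\<forall>y\<in>{u..x0}. F y \<le> F z"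
      using continuous_attains_sup[of "{u..x0}" F] u by auto
    have Fx0z: "F x0 \<le> F z" using zmax u by simp
    hence "z \<noteq> u" using u by auto
    hence zu: "u < z" using z by auto
    have "deriv g z * lam z - g z * D 1 z \<ge> 0"
    proof (rule ccontr)
      assume nt: "\<not> ?thesis"
      hence neg: "(deriv g z * lam z - g z * D 1 z) / (lam z * lam z) < 0"
      proof -
        have "z \<ge> 0" using zu u by simp
        hence "lam z > 0" using lam_pos by blast
        thus ?thesis using nt by (simp add: divide_neg_pos)
      qed
      obtain d where d: "d > 0" "\<forall>h>0. h < d \<longrightarrow> F z < F (z - h)"
        using DERIV_neg_dec_left[OF F_der neg] zu u by auto
      define h where "h = min (d/2) ((z - u)/2)"
      have "h > 0" "h < d" using d zu unfolding h_def by auto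
      hence "F z < F (z - h)" using d by auto
      moreover have "z - h \<in> {u..x0}"
      proof -
        have "h \<le> (z - u) / 2" unfolding h_def by (rule min.cobounded2)
        thus ?thesis using z zu \<open>h > 0\<close> by simp
      qed
      ultimately show False using zmax by (meson not_le)
    qed
    thus ?thesis using zu z Fx0z by auto
  qed

  obtain L where L: "L = Liminf at_top (\<lambda>x. S_int x lam)" by simp
  obtain c where c: "0 < c" "c < L" using dense[of 0 L] S_liminf L by auto
  have cfin: "c < \<infinity>" by (rule less_le_trans[OF c(2)]) simp
  have evS: "eventually (\<lambda>x. S_int x lam > c) at_top" using less_LiminfD[of c] c L by simp
  then obtain M1 where M1: "\<And>x. x \<ge> M1 \<Longrightarrow> S_int x lam > c" by (auto simp: eventually_at_top_linorder)
  have finF: "(\<integral>\<^sup>+ x \<in> {0<..}. ennreal (F x) \<partial>lborel) < \<infinity>" using int_fin unfolding F_def .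
  define I where "I = enn2real (\<integral>\<^sup>+ x \<in> {0<..}. ennreal (F x) \<partial>lborel)"
  have I_eq: "(\<integral>\<^sup>+ x \<in> {0<..}. ennreal (F x) \<partial>lborel) = ennreal I"
    unfolding I_def using finF by (simp add: less_top[symmetric])
  have I_nn: "I \<ge> 0" unfolding I_def by simp

  have main: "\<exists>N. \<forall>x\<ge>N. F x < \<epsilon>" if eps: "\<epsilon> > 0" for \<epsilon>
  proof -
    have "ennreal \<epsilon> * c > 0" using eps c by (simp add: ennreal_zero_less_mult_iff)
    then obtain M2 where M2: "\<And>z. z \<ge> M2 \<Longrightarrow> (\<integral>\<^sup>+ x \<in> {z..}. ennreal (F x) \<partial>lborel) < ennreal \<epsilon> * c"
      using tail_small[OF F_cont finF \<open>ennreal \<epsilon> * c > 0\<close>] by blast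
    define M where "M = max 1 (max M1 M2)"
    have Mpos: "M > 0" unfolding M_def by simp
    show ?thesis
    proof (intro exI allI impI)
      fix x0 assume x0: "x0 \<ge> M + I / \<epsilon> + 1"
      have IeI: "I / \<epsilon> \<ge> 0" using I_nn eps by simp
      hence Mx: "M < x0" using x0 by linarith
      show "F x0 < \<epsilon>"
      proof (cases "\<exists>u\<in>{M..x0}. F u < F x0")
        case True
        then obtain u where u: "u \<in> {M..x0}" "F u < F x0" by blast
        have "u \<noteq> x0" using u(2) by auto
        hence "u < x0" "u > 0" using u(1) Mpos by auto
        then obtain z where z: "u < z" "z \<le> x0" "F x0 \<le> F z" "deriv g z * lam z - g z * D 1 z \<ge> 0"
          using maxarg u by blast
        have zM: "z \<ge> M" using z u by auto
        hence zpos: "z > 0" using Mpos by linarith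
        have "ennreal (F z) * c \<le> ennreal (F z) * S_int z lam"
          using M1[of z] zM unfolding M_def by (intro mult_left_mono) auto
        also have "\<dots> \<le> (\<integral>\<^sup>+ x \<in> {z..}. ennreal (F x) \<partial>lborel)" by (rule good[OF zpos z(4)])
        also have "\<dots> < ennreal \<epsilon> * c" using M2[of z] zM unfolding M_def by auto
        finally have lt: "ennreal (F z) * c < ennreal \<epsilon> * c" .
        have "ennreal (F z) < ennreal \<epsilon>"
        proof (rule ccontr)
          assume "\<not> ennreal (F z) < ennreal \<epsilon>"
          hence "ennreal \<epsilon> \<le> ennreal (F z)" by simp
          hence "ennreal \<epsilon> * c \<le> ennreal (F z) * c" by (rule mult_right_mono) simp
          thus False using lt by simp
        qed
        hence "F z < \<epsilon>" using eps F_pos[OF zpos] ennreal_less_iff[of "F z" \<epsilon>] by simp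
        thus ?thesis using z(3) by linarith
      next
        case False
        hence ge: "\<forall>u\<in>{M..x0}. F x0 \<le> F u" by (auto simp: not_less)
        have "ennreal (F x0) * emeasure lborel {M..x0} = (\<integral>\<^sup>+ x. ennreal (F x0) * indicator {M..x0} x \<partial>lborel)"
          by (rule nn_integral_cmult_indicator[symmetric]) simp
        also have "\<dots> \<le> (\<integral>\<^sup>+ x \<in> {0<..}. ennreal (F x) \<partial>lborel)"
          using ge Mpos by (intro nn_integral_mono) (auto simp: indicator_def ennreal_leI)
        finally have "ennreal (F x0 * (x0 - M)) \<le> ennreal I"
          using Mx F_pos[of x0] Mpos I_eq by (simp add: ennreal_mult'')
        hence le: "F x0 * (x0 - M) \<le> I" using I_nn by (simp add: ennreal_le_iff)
        have "I < \<epsilon> * (x0 - M)"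
        proof -
          have "I / \<epsilon> < x0 - M" using x0 by linarith
          thus ?thesis using eps by (simp add: divide_less_eq mult.commute)
        qed
        hence "F x0 * (x0 - M) < \<epsilon> * (x0 - M)" using le by linarith
        thus ?thesis using Mx by simp
      qed
    qed
  qed
  show ?thesis
  proof (rule tendstoI)
    fix e :: real assume e: "e > 0"
    obtain N where N: "\<forall>x\<ge>N. F x < e" using main[OF e] by blast
    show "eventually (\<lambda>x. dist (g x / lam x) 0 < e) at_top"
      unfolding eventually_at_top_linorder
    proof (intro exI allI impI)
      fix x assume x: "x \<ge> max N 1"
      hence "F x > 0" "F x < e" using F_pos N by auto
      thus "dist (g x / lam x) 0 < e" unfolding F_def by simp
    qed
  qed
qed

end
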